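(* Let $p$ be an odd prime and let $(G,H,T)$ be the envelope of a right conjugacy closed loop of order $2p$. Let $K$ be a subgroup with $H\lneq K\lneq G$, $|G:K|=2$ and $|K:H|=p$, and put $K_1=\langle T\cap K\rangle$, $H_1=H\cap K_1$. Then $|H_1|\in\{1,p\}$ and $K_1$ is elementary abelian of order $p$ or $p^2$.
   Context: For a finite loop $\mathcal{L}$ with identity $e$: $G=\langle R_a\mid a\in\mathcal L\rangle$ with $R_a\colon x\mapsto xa$, $H$ the stabilizer of $e$ in $G$, $T=\{R_a\}$; $(G,H,T)$ is the envelope; the loop is right conjugacy closed if $T$ is a union of conjugacy classes of $G$. *)

theory Defs
  imports "HOL-Algebra.Algebra"
begin

definition is_loop :: "'a set \<Rightarrow> ('a \<Rightarrow> 'a \<Rightarrow> 'a) \<Rightarrow> 'a \<Rightarrow> bool" where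
  "is_loop L f e \<longleftrightarrow> e \<in> L \<and> (\<forall>x\<in>L. \<forall>y\<in>L. f x y \<in> L)
     \<and> (\<forall>x\<in>L. f e x = x \<and> f x e = x)
     \<and> (\<forall>a\<in>L. bij_betw (\<lambda>x. f a x) L L)
     \<and> (\<forall>a\<in>L. bij_betw (\<lambda>x. f x a) L L)"

definition rtrans :: "'a set \<Rightarrow> ('a \<Rightarrow> 'a \<Rightarrow> 'a) \<Rightarrow> 'a \<Rightarrow> ('a \<Rightarrow> 'a)" where
  "rtrans L f a = restrict (\<lambda>x. f x a) L"

definition env_T :: "'a set \<Rightarrow> ('a \<Rightarrow> 'a \<Rightarrow> 'a) \<Rightarrow> ('a \<Rightarrow> 'a) set" where
  "env_T L f = rtrans L f ` L"

definition env_G :: "'a set \<Rightarrow> ('a \<Rightarrow> 'a \<Rightarrow> 'a) \<Rightarrow> ('a \<Rightarrow> 'a) monoid" where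
  "env_G L f = (BijGroup L)\<lparr>carrier := generate (BijGroup L) (env_T L f)\<rparr>"

definition env_H :: "'a set \<Rightarrow> ('a \<Rightarrow> 'a \<Rightarrow> 'a) \<Rightarrow> 'a \<Rightarrow> ('a \<Rightarrow> 'a) set" where
  "env_H L f e = {g \<in> carrier (env_G L f). g e = e}"

definition right_cc :: "'a set \<Rightarrow> ('a \<Rightarrow> 'a \<Rightarrow> 'a) \<Rightarrow> bool" where
  "right_cc L f \<longleftrightarrow> (\<forall>g \<in> carrier (env_G L f). \<forall>t \<in> env_T L f.
      g \<otimes>\<^bsub>env_G L f\<^esub> t \<otimes>\<^bsub>env_G L f\<^esub> inv\<^bsub>env_G L f\<^esub> g \<in> env_T L f)"

definition elem_abelian :: "('g, 'b) monoid_scheme \<Rightarrow> nat \<Rightarrow> bool" where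
  "elem_abelian G p \<longleftrightarrow> comm_group G \<and> (\<forall>x \<in> carrier G. x [^]\<^bsub>G\<^esub> p = \<one>\<^bsub>G\<^esub>)"

end

theory Submission imports Defs begin


lemma orbit_lemma:
  fixes \<phi> :: "'b \<Rightarrow> 'b" and p n :: nat
  assumes pr: "Factorial_Ring.prime p" and per: "(\<phi>^^(p^n)) x = x" and nf: "\<phi> x \<noteq> x"
  shows "\<exists>m. p \<le> m \<and> m dvd p^n \<and> (\<phi>^^m) x = x \<and> inj_on (\<lambda>i. (\<phi>^^i) x) {..<m}"
proof -
  define m where "m = (LEAST m. 0 < m \<and> (\<phi>^^m) x = x)"
  have pp: "0 < p^n" using pr prime_gt_0_nat by simp
  have m: "0 < m \<and> (\<phi>^^m) x = x" unfolding m_def by (rule LeastI[of _ "p^n"]) (use pp per in auto)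
  have least: "\<And>k. 0 < k \<Longrightarrow> k < m \<Longrightarrow> (\<phi>^^k) x \<noteq> x"
    unfolding m_def using not_less_Least by blast
  have perq: "(\<phi>^^(q*m)) x = x" for q
  proof (induct q)
    case (Suc q)
    have "(\<phi>^^(Suc q * m)) x = (\<phi>^^m) ((\<phi>^^(q*m)) x)" by (simp add: funpow_add)
    thus ?case using Suc m by simp
  qed simp
  have md: "(\<phi>^^k) x = (\<phi>^^(k mod m)) x" for k
  proof -
    have "(\<phi>^^k) x = (\<phi>^^(k mod m + (k div m) * m)) x" by simp
    also have "\<dots> = (\<phi>^^(k mod m)) ((\<phi>^^((k div m) * m)) x)" by (simp only: funpow_add comp_apply)
    finally have "(\<phi>^^k) x = (\<phi>^^(k mod m)) ((\<phi>^^((k div m) * m)) x)" .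
    thus ?thesis using perq by simp
  qed
  have dv: "m dvd p^n"
  proof (rule ccontr)
    assume "\<not> m dvd p^n"
    hence "0 < p^n mod m" by (simp add: mod_greater_zero_iff_not_dvd)
    moreover have "p^n mod m < m" using m by simp
    moreover have "(\<phi>^^(p^n mod m)) x = x" using md[of "p^n"] per by simp
    ultimately show False using least by blast
  qed
  then obtain i where i: "i \<le> n" "m = p^i" using divides_primepow_nat[OF pr] by auto
  have "i \<noteq> 0"
  proof
    assume "i = 0"
    hence "(\<phi>^^(Suc 0)) x = x" using i m by simp
    thus False using nf by simp
  qed
  hence "p^1 \<le> p^i" using prime_gt_0_nat[OF pr] by (intro power_increasing) auto
  hence pm: "p \<le> m" using i by simp
  have inj: "inj_on (\<lambda>i. (\<phi>^^i) x) {..<m}"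
  proof (rule inj_onI)
    fix a b assume a: "a \<in> {..<m}" and b: "b \<in> {..<m}" and eq: "(\<phi>^^a) x = (\<phi>^^b) x"
    show "a = b"
    proof (rule ccontr)
      assume ne: "a \<noteq> b"
      have key: "\<And>a b. a < b \<Longrightarrow> b < m \<Longrightarrow> (\<phi>^^a) x = (\<phi>^^b) x \<Longrightarrow> False"
      proof -
        fix a b assume ab: "a < b" "b < m" "(\<phi>^^a) x = (\<phi>^^b) x"
        have "(\<phi>^^(m - b + a)) x = (\<phi>^^(m-b)) ((\<phi>^^a) x)" by (simp add: funpow_add)
        also have "\<dots> = (\<phi>^^(m-b)) ((\<phi>^^b) x)" using ab by simp
        also have "\<dots> = (\<phi>^^(m - b + b)) x" by (simp add: funpow_add)
        also have "\<dots> = x" using ab m by simp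
        finally have eqx: "(\<phi>^^(m - b + a)) x = x" .
        have l1: "0 < m - b + a" using ab by arith
        have l2: "m - b + a < m" using ab by arith
        from least[OF l1 l2] eqx show False by (rule notE)
      qed
      show False
      proof (cases "a < b")
        case True thus False using key b eq by auto
      next
        case False hence ba: "b < a" using ne by simp
        have am: "a < m" using a by simp
        have "(\<phi>^^b) x = (\<phi>^^a) x" using eq by simp
        thus False using key[OF ba am] by blast
      qed
    qed
  qed
  show ?thesis using pm dv m inj by blast
qed

lemma fp: "(f^^m) ((f^^n) x) = (f^^(m+n)) x" by (simp add: funpow_add)

locale rccx =
  fixes L :: "'a set" and f :: "'a \<Rightarrow> 'a \<Rightarrow> 'a" and e :: 'a and p :: nat
    and K :: "('a \<Rightarrow> 'a) set" and G (structure)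
  assumes Gdef: "G = env_G L f" and pr: "Factorial_Ring.prime p"
    and finL: "finite L" and loop: "is_loop L f e" and rcc: "right_cc L f"
    and cardL: "card L = 2 * p"
    and subK: "subgroup K G"
    and HK: "env_H L f e \<subset> K" and KG: "K \<subset> carrier G"
    and cardKH: "card (rcosets\<^bsub>G\<lparr>carrier := K\<rparr>\<^esub> (env_H L f e)) = p"
begin

abbreviation "T \<equiv> env_T L f"
abbreviation "H \<equiv> env_H L f e"
abbreviation "R \<equiv> rtrans L f"

lemma eL: "e \<in> L" using loop unfolding is_loop_def by blast
lemma fL: "x \<in> L \<Longrightarrow> y \<in> L \<Longrightarrow> f x y \<in> L" using loop unfolding is_loop_def by blast
lemma fe: "x \<in> L \<Longrightarrow> f e x = x" "x \<in> L \<Longrightarrow> f x e = x" using loop unfolding is_loop_def by blast+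
lemma lbij: "a \<in> L \<Longrightarrow> bij_betw (\<lambda>x. f a x) L L" using loop unfolding is_loop_def by blast
lemma rbij: "a \<in> L \<Longrightarrow> bij_betw (\<lambda>x. f x a) L L" using loop unfolding is_loop_def by blast

lemma R_Bij: "a \<in> L \<Longrightarrow> R a \<in> Bij L"
proof -
  assume a: "a \<in> L"
  have "bij_betw (R a) L L \<longleftrightarrow> bij_betw (\<lambda>x. f x a) L L"
    by (rule bij_betw_cong) (simp add: rtrans_def)
  hence "bij_betw (R a) L L" using rbij[OF a] by simp
  moreover have "R a \<in> extensional L" unfolding rtrans_def by (rule restrict_extensional)
  ultimately show ?thesis unfolding Bij_def by simp
qed

lemma T_Bij: "T \<subseteq> Bij L" unfolding env_T_def using R_Bij by auto

lemma BG: "group (BijGroup L)" by (rule group_BijGroup)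

lemma carrG: "carrier G = generate (BijGroup L) T" unfolding Gdef env_G_def by simp

lemma sgG: "subgroup (carrier G) (BijGroup L)"
  unfolding carrG by (rule group.generate_is_subgroup[OF BG]) (simp add: T_Bij BijGroup_def)

lemma grp: "group G"
proof -
  have "group ((BijGroup L)\<lparr>carrier := carrier G\<rparr>)"
    by (rule subgroup.subgroup_is_group[OF sgG BG])
  moreover have "(BijGroup L)\<lparr>carrier := carrier G\<rparr> = G" unfolding Gdef env_G_def by simp
  ultimately show ?thesis by simp
qed

sublocale group G by (rule grp)

lemma carrB: "carrier (BijGroup L) = Bij L" by (simp add: BijGroup_def)

lemma carrG_Bij: "carrier G \<subseteq> Bij L"
  using subgroup.subset[OF sgG] unfolding carrB .

lemma T_G: "T \<subseteq> carrier G"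
  unfolding carrG by (rule subsetI, rule generate.incl)

lemma mult_eq: "g \<in> carrier G \<Longrightarrow> h \<in> carrier G \<Longrightarrow> g \<otimes> h = compose L g h"
proof -
  assume g: "g \<in> carrier G" and h: "h \<in> carrier G"
  have gB: "g \<in> Bij L" and hB: "h \<in> Bij L" using g h carrG_Bij by auto
  have "g \<otimes> h = (\<lambda>g \<in> Bij L. \<lambda>f \<in> Bij L. compose L g f) g h"
    unfolding Gdef env_G_def by (simp add: BijGroup_def)
  also have "\<dots> = compose L g h" using gB hB by simp
  finally show ?thesis .
qed

lemma mult_apply: "g \<in> carrier G \<Longrightarrow> h \<in> carrier G \<Longrightarrow> x \<in> L \<Longrightarrow> (g \<otimes> h) x = g (h x)"
  by (simp add: mult_eq compose_eq)

lemma one_apply: "x \<in> L \<Longrightarrow> \<one> x = x"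
  unfolding Gdef env_G_def by (simp add: BijGroup_def)

lemma bijG: "g \<in> carrier G \<Longrightarrow> bij_betw g L L"
proof -
  assume "g \<in> carrier G"
  hence "g \<in> Bij L" using carrG_Bij by (rule subsetD[rotated])
  thus ?thesis unfolding Bij_def by simp
qed

lemma extlG: "g \<in> carrier G \<Longrightarrow> g \<in> extensional L"
proof -
  assume "g \<in> carrier G"
  hence "g \<in> Bij L" using carrG_Bij by (rule subsetD[rotated])
  thus ?thesis unfolding Bij_def by simp
qed

lemma memL: "g \<in> carrier G \<Longrightarrow> x \<in> L \<Longrightarrow> g x \<in> L"
  using bijG bij_betwE by blast

lemma injG: "g \<in> carrier G \<Longrightarrow> inj_on g L"
  using bijG bij_betw_imp_inj_on by blast

lemma extG: "g \<in> carrier G \<Longrightarrow> h \<in> carrier G \<Longrightarrow> (\<And>x. x \<in> L \<Longrightarrow> g x = h x) \<Longrightarrow> g = h"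
  by (rule extensionalityI[OF extlG extlG])

lemma inv_apply1: "g \<in> carrier G \<Longrightarrow> x \<in> L \<Longrightarrow> (inv g) (g x) = x"
proof -
  assume g: "g \<in> carrier G" and x: "x \<in> L"
  have "(inv g \<otimes> g) x = x" using group.l_inv[OF grp g] x by (simp add: one_apply)
  moreover have "(inv g \<otimes> g) x = (inv g) (g x)" by (rule mult_apply[OF inv_closed[OF g] g x])
  ultimately show ?thesis by simp
qed

lemma inv_apply2: "g \<in> carrier G \<Longrightarrow> x \<in> L \<Longrightarrow> g ((inv g) x) = x"
proof -
  assume g: "g \<in> carrier G" and x: "x \<in> L"
  have "(g \<otimes> inv g) x = x" using group.r_inv[OF grp g] x by (simp add: one_apply)
  moreover have "(g \<otimes> inv g) x = g ((inv g) x)" by (rule mult_apply[OF g inv_closed[OF g] x])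
  ultimately show ?thesis by simp
qed

lemma finG: "finite (carrier G)"
proof -
  have "carrier G \<subseteq> extensional_funcset L L"
  proof
    fix g assume g: "g \<in> carrier G"
    show "g \<in> extensional_funcset L L" unfolding PiE_iff using memL[OF g] extlG[OF g] by blast
  qed
  moreover have "finite (extensional_funcset L L)" using finL by (simp add: finite_PiE)
  ultimately show ?thesis by (rule finite_subset)
qed

lemma R_apply: "x \<in> L \<Longrightarrow> R a x = f x a" unfolding rtrans_def by simp
lemma R_e: "a \<in> L \<Longrightarrow> R a e = a" using eL by (simp add: R_apply fe)
lemma R_T: "a \<in> L \<Longrightarrow> R a \<in> T" unfolding env_T_def by simp
lemma T_eq: "t \<in> T \<Longrightarrow> R (t e) = t \<and> t e \<in> L"
proof -
  assume "t \<in> T"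
  then obtain a where a: "a \<in> L" "t = R a" unfolding env_T_def by auto
  thus ?thesis using R_e[OF a(1)] by simp
qed
lemma R_inj: "inj_on R L" by (metis R_e inj_onI)
lemma R_one: "R e = \<one>"
proof -
  have "\<one> = (\<lambda>x\<in>L. x)" unfolding Gdef env_G_def by (simp add: BijGroup_def)
  also have "\<dots> = R e" unfolding rtrans_def by (rule restrict_ext) (simp add: fe)
  finally show ?thesis by simp
qed


lemma subH: "subgroup H G"
proof (rule subgroupI)
  show "H \<subseteq> carrier G" unfolding env_H_def Gdef by auto
  show "H \<noteq> {}" using one_apply[OF eL] unfolding env_H_def Gdef[symmetric] by auto
  fix a b assume a: "a \<in> H"
  then show "inv a \<in> H" unfolding env_H_def Gdef[symmetric]
    using inv_apply1[of a e] eL by auto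
  assume b: "b \<in> H"
  then show "a \<otimes> b \<in> H" using a unfolding env_H_def Gdef[symmetric]
    using mult_apply eL by auto
qed

lemma H_iff: "g \<in> H \<longleftrightarrow> g \<in> carrier G \<and> g e = e"
  unfolding env_H_def Gdef[symmetric] by auto

lemma K_G: "K \<subseteq> carrier G" using KG by auto
lemma H_K: "H \<subseteq> K" using HK by auto

definition "A = (\<lambda>k. k e) ` K"
definition "S = T \<inter> K"

lemma A_L: "A \<subseteq> L" unfolding A_def using K_G memL eL by auto
lemma e_A: "e \<in> A" unfolding A_def using subgroup.one_closed[OF subK] one_apply[OF eL]
  by (metis image_eqI)
lemma K_A: "k \<in> K \<Longrightarrow> x \<in> A \<Longrightarrow> k x \<in> A"
proof -
  assume k: "k \<in> K" and x: "x \<in> A"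
  then obtain k1 where k1: "k1 \<in> K" "x = k1 e" unfolding A_def by auto
  have kG: "k \<in> carrier G" "k1 \<in> carrier G" using k k1 K_G by auto
  have "k x = (k \<otimes> k1) e" using mult_apply[OF kG(1) kG(2) eL] k1(2) by simp
  moreover have "k \<otimes> k1 \<in> K" using subgroup.m_closed[OF subK k k1(1)] .
  ultimately show ?thesis unfolding A_def by auto
qed

lemma RA_K: "a \<in> A \<Longrightarrow> R a \<in> K"
proof -
  assume a: "a \<in> A"
  then obtain k where k: "k \<in> K" "a = k e" unfolding A_def by auto
  have aL: "a \<in> L" using a A_L by auto
  have Ra: "R a \<in> carrier G" using R_T[OF aL] T_G by auto
  have kG: "k \<in> carrier G" using k K_G by auto
  define h where "h = inv (R a) \<otimes> k"
  have hG: "h \<in> carrier G" unfolding h_def using Ra kG by simp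
  have "h e = (inv (R a)) (k e)" unfolding h_def by (rule mult_apply[OF inv_closed[OF Ra] kG eL])
  also have "\<dots> = (inv (R a)) (R a e)" using k(2) R_e[OF aL] by simp
  also have "\<dots> = e" by (rule inv_apply1[OF Ra eL])
  finally have "h e = e" .
  hence hK: "h \<in> K" using H_K H_iff hG by auto
  have eq: "R a = k \<otimes> inv h" unfolding h_def using Ra kG
    by (simp add: inv_mult_group m_assoc[symmetric])
  have "inv h \<in> K" by (rule subgroup.m_inv_closed[OF subK hK])
  hence "k \<otimes> inv h \<in> K" by (rule subgroup.m_closed[OF subK k(1)])
  thus ?thesis using eq by simp
qed

lemma S_eq: "S = R ` A"
proof
  show "S \<subseteq> R ` A"
  proof
    fix t assume t: "t \<in> S"
    hence tT: "t \<in> T" and tK: "t \<in> K" unfolding S_def by auto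
    have "t e \<in> A" using tK unfolding A_def by auto
    thus "t \<in> R ` A" using image_eqI[of t R "t e" A] T_eq[OF tT] by simp
  qed
  show "R ` A \<subseteq> S" unfolding S_def using RA_K R_T A_L by auto
qed

lemma S_G: "S \<subseteq> carrier G" unfolding S_def using T_G by auto
lemma S_K: "S \<subseteq> K" unfolding S_def by auto
lemma one_S: "\<one> \<in> S" unfolding S_eq using e_A R_one by (metis image_eqI)
lemma card_S: "card S = card A" unfolding S_eq using inj_on_subset[OF R_inj A_L] by (simp add: card_image)
lemma finA: "finite A" using A_L finL finite_subset by auto
lemma finS: "finite S" unfolding S_eq using finA by simp
lemma S_inj_e: "s \<in> S \<Longrightarrow> s' \<in> S \<Longrightarrow> s e = s' e \<Longrightarrow> s = s'"
proof -
  assume s: "s \<in> S" and s': "s' \<in> S" and eq: "s e = s' e"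
  have "s = R (s e)" using s T_eq unfolding S_def by simp
  also have "\<dots> = R (s' e)" using eq by simp
  also have "\<dots> = s'" using s' T_eq unfolding S_def by simp
  finally show ?thesis .
qed

lemma prod_card:
  assumes M: "subgroup M G" and SM: "S \<subseteq> M" and MK: "M \<subseteq> K"
  shows "card M = card S * card (H \<inter> M)"
proof -
  have MG: "M \<subseteq> carrier G" using subgroup.subset[OF M] .
  have "bij_betw (\<lambda>(s,h). s \<otimes> h) (S \<times> (H \<inter> M)) M"
  proof (rule bij_betw_imageI)
    show "inj_on (\<lambda>(s,h). s \<otimes> h) (S \<times> (H \<inter> M))"
    proof (rule inj_onI, clarsimp)
      fix s h s' h' assume s: "s \<in> S" and h: "h \<in> H" "h \<in> M" and s': "s' \<in> S" and h': "h' \<in> H" "h' \<in> M"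
        and eq: "s \<otimes> h = s' \<otimes> h'"
      have sG: "s \<in> carrier G" "s' \<in> carrier G" using s s' S_G by auto
      have hG: "h \<in> carrier G" "h' \<in> carrier G" using h h' MG by auto
      have "(s \<otimes> h) e = s e" using mult_apply[OF sG(1) hG(1) eL] h H_iff by simp
      moreover have "(s' \<otimes> h') e = s' e" using mult_apply[OF sG(2) hG(2) eL] h' H_iff by simp
      ultimately have "s = s'" using eq S_inj_e s s' by metis
      with eq sG hG show "s = s' \<and> h = h'" by simp
    qed
    show "(\<lambda>(s,h). s \<otimes> h) ` (S \<times> (H \<inter> M)) = M"
    proof
      show "(\<lambda>(s,h). s \<otimes> h) ` (S \<times> (H \<inter> M)) \<subseteq> M"
        using SM subgroup.m_closed[OF M] by auto
      show "M \<subseteq> (\<lambda>(s,h). s \<otimes> h) ` (S \<times> (H \<inter> M))"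
      proof
        fix z assume z: "z \<in> M"
        have zG: "z \<in> carrier G" using z MG by auto
        have zA: "z e \<in> A" using z MK unfolding A_def by auto
        define s where "s = R (z e)"
        have s: "s \<in> S" unfolding s_def S_eq using zA by auto
        have sG: "s \<in> carrier G" using s S_G by auto
        define h where "h = inv s \<otimes> z"
        have hM: "h \<in> M" unfolding h_def using s SM z subgroup.m_closed[OF M] subgroup.m_inv_closed[OF M] by auto
        have hG: "h \<in> carrier G" using hM MG by auto
        have zeL: "z e \<in> L" using zA A_L by auto
        have "h e = (inv s) (z e)" unfolding h_def by (rule mult_apply[OF inv_closed[OF sG] zG eL])
        also have "\<dots> = (inv s) (s e)" unfolding s_def using R_e[OF zeL] by simp
        also have "\<dots> = e" by (rule inv_apply1[OF sG eL])
        finally have "h e = e" .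
        hence "h \<in> H" using H_iff hG by auto
        moreover have "z = s \<otimes> h" unfolding h_def using sG zG by (simp add: m_assoc[symmetric])
        ultimately show "z \<in> (\<lambda>(s,h). s \<otimes> h) ` (S \<times> (H \<inter> M))" using s hM by auto
      qed
    qed
  qed
  hence "card M = card (S \<times> (H \<inter> M))" by (simp add: bij_betw_same_card)
  thus ?thesis by (simp add: card_cartesian_product)
qed

lemma card_K: "card K = card A * card H"
  using prod_card[OF subK S_K order_refl] H_K card_S by (simp add: Int_absorb2)

lemma finH: "finite H" using finG subgroup.subset[OF subH] finite_subset by auto

lemma card_A: "card A = p"
proof -
  interpret KG: group "G\<lparr>carrier := K\<rparr>" by (rule subgroup_imp_group[OF subK])
  have sHK: "subgroup H (G\<lparr>carrier := K\<rparr>)" by (rule subgroup_incl[OF subH subK H_K])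
  have "card (rcosets\<^bsub>G\<lparr>carrier := K\<rparr>\<^esub> H) * card H = order (G\<lparr>carrier := K\<rparr>)"
    by (rule KG.lagrange[OF sHK])
  hence "p * card H = card A * card H" using cardKH card_K by (simp add: order_def)
  moreover have "card H > 0" using finH subgroup.one_closed[OF subH] card_gt_0_iff by auto
  ultimately show ?thesis by simp
qed


lemma pow_carrier: "x [^]\<^bsub>MM\<lparr>carrier := YY\<rparr>\<^esub> (n::nat) = x [^]\<^bsub>MM\<^esub> n"
  by (simp add: nat_pow_def)

lemma pow_apply: "c \<in> carrier G \<Longrightarrow> y \<in> L \<Longrightarrow> (c [^] (i::nat)) y = (c^^i) y"
proof (induct i arbitrary: y)
  case 0 thus ?case by (simp add: one_apply)
next
  case (Suc i)
  have "(c [^] Suc i) y = (c [^] i) (c y)" using Suc mult_apply by simp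
  also have "\<dots> = (c^^i) (c y)" using Suc memL by simp
  finally show ?case by (simp add: funpow_Suc_right del: funpow.simps)
qed

lemma conj_pow: "c \<in> carrier G \<Longrightarrow> s \<in> carrier G \<Longrightarrow>
   ((\<lambda>s. c \<otimes> s \<otimes> inv c)^^i) s = c [^] (i::nat) \<otimes> s \<otimes> inv (c [^] i)"
proof (induct i)
  case 0 thus ?case by simp
next
  case (Suc i)
  have ci: "c [^] i \<in> carrier G" using Suc by simp
  have "((\<lambda>s. c \<otimes> s \<otimes> inv c)^^Suc i) s = c \<otimes> (c [^] i \<otimes> s \<otimes> inv (c [^] i)) \<otimes> inv c"
    using Suc by simp
  also have "\<dots> = (c \<otimes> c [^] i) \<otimes> s \<otimes> inv (c \<otimes> c [^] i)"
    using Suc ci by (simp add: inv_mult_group m_assoc)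
  also have "c \<otimes> c [^] i = c [^] Suc i" using nat_pow_Suc2[OF Suc(2)] by simp
  finally show ?case .
qed

lemma sylow_elt: "\<exists>c n. c \<in> K \<and> c e \<noteq> e \<and> c [^] (p^n) = \<one>"
proof -
  interpret KG: group "G\<lparr>carrier := K\<rparr>" by (rule subgroup_imp_group[OF subK])
  have cK: "card K = p * card H" using card_K card_A by simp
  have finK: "finite K" using finG K_G finite_subset by auto
  have Kpos: "card K \<noteq> 0" using finK subgroup.one_closed[OF subK] by auto
  define a where "a = multiplicity p (card K)"
  have ord: "order (G\<lparr>carrier := K\<rparr>) = p^a * (card K div p^a)"
    unfolding a_def order_def using dvd_mult_div_cancel[OF multiplicity_dvd[of p "card K"]] by simp
  obtain P where P: "subgroup P (G\<lparr>carrier := K\<rparr>)" "card P = p^a"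
    using sylow_thm[OF pr KG.is_group ord] finK by auto
  have PK: "P \<subseteq> K" using subgroup.subset[OF P(1)] by simp
  have "\<exists>c\<in>P. c e \<noteq> e"
  proof (rule ccontr)
    assume "\<not> (\<exists>c\<in>P. c e \<noteq> e)"
    hence PH: "P \<subseteq> H" using PK K_G H_iff by auto
    have sHK: "subgroup H (G\<lparr>carrier := K\<rparr>)" by (rule subgroup_incl[OF subH subK H_K])
    interpret HG: group "G\<lparr>carrier := K\<rparr>\<lparr>carrier := H\<rparr>" by (rule KG.subgroup_imp_group[OF sHK])
    have "subgroup P (G\<lparr>carrier := K\<rparr>\<lparr>carrier := H\<rparr>)" by (rule KG.subgroup_incl[OF P(1) sHK PH])
    from HG.lagrange[OF this] have "card (rcosets\<^bsub>G\<lparr>carrier := K\<rparr>\<lparr>carrier := H\<rparr>\<^esub> P) * card P = card H"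
      by (simp add: order_def)
    hence "card P dvd card H" by (metis dvd_triv_right)
    hence d: "p^(Suc a) dvd card K" using cK P(2) by simp
    have nu: "\<not> is_unit p" using not_prime_unit pr by blast
    have "Suc a \<le> multiplicity p (card K)" by (rule multiplicity_geI[OF Kpos nu d])
    hence "Suc a \<le> a" unfolding a_def .
    thus False by simp
  qed
  then obtain c where c: "c \<in> P" "c e \<noteq> e" by auto
  interpret PG: group "G\<lparr>carrier := K\<rparr>\<lparr>carrier := P\<rparr>" by (rule KG.subgroup_imp_group[OF P(1)])
  have "c [^]\<^bsub>G\<lparr>carrier := K\<rparr>\<lparr>carrier := P\<rparr>\<^esub> order (G\<lparr>carrier := K\<rparr>\<lparr>carrier := P\<rparr>) = \<one>\<^bsub>G\<lparr>carrier := K\<rparr>\<lparr>carrier := P\<rparr>\<^esub>"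
    by (rule PG.pow_order_eq_1) (use c in simp)
  hence "c [^] (p^a) = \<one>" using P(2) by (simp add: pow_carrier order_def)
  thus ?thesis using c PK by blast
qed


lemma rccG: "h \<in> carrier G \<Longrightarrow> t \<in> T \<Longrightarrow> h \<otimes> t \<otimes> inv h \<in> T"
proof -
  assume h: "h \<in> carrier G" and t: "t \<in> T"
  have A: "\<forall>g\<in>carrier G. \<forall>t\<in>T. g \<otimes> t \<otimes> inv g \<in> T"
    using rcc unfolding right_cc_def Gdef[symmetric] .
  show ?thesis using A h t by simp
qed

lemma sub_pow_closed: "subgroup M G \<Longrightarrow> x \<in> M \<Longrightarrow> x [^] (i::nat) \<in> M"
proof (induct i)
  case 0 thus ?case by (simp add: subgroup.one_closed)
next
  case (Suc i) thus ?case by (simp add: subgroup.m_closed)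
qed

lemma comm_inv: "x \<in> carrier G \<Longrightarrow> y \<in> carrier G \<Longrightarrow> x \<otimes> y = y \<otimes> x \<Longrightarrow> inv x \<otimes> y = y \<otimes> inv x"
proof -
  assume x: "x \<in> carrier G" and y: "y \<in> carrier G" and eq: "x \<otimes> y = y \<otimes> x"
  have "y \<otimes> inv x = inv x \<otimes> (x \<otimes> y) \<otimes> inv x" using x y by (simp add: m_assoc[symmetric])
  also have "\<dots> = inv x \<otimes> (y \<otimes> x) \<otimes> inv x" using eq by simp
  also have "\<dots> = inv x \<otimes> y" using x y by (simp add: m_assoc)
  finally show ?thesis by simp
qed

end

locale rccy = rccx +
  fixes c n g
  assumes cK: "c \<in> K" and ce: "c e \<noteq> e" and cp: "c [^] (p^n) = \<one>"
    and gG: "g \<in> carrier G" and gK: "g \<notin> K"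
begin

lemma cG: "c \<in> carrier G" using cK K_G by auto

lemma cA: "x \<in> A \<Longrightarrow> (c^^i) x \<in> A"
  by (induct i) (auto simp: K_A[OF cK])

lemma c_cycle: "(c^^p) e = e \<and> A = (\<lambda>i. (c^^i) e) ` {..<p}"
proof -
  have "(c^^(p^n)) e = e" using pow_apply[OF cG eL, of "p^n"] cp one_apply[OF eL] by simp
  from orbit_lemma[OF pr this ce] obtain m where
    m: "p \<le> m" "(c^^m) e = e" "inj_on (\<lambda>i. (c^^i) e) {..<m}" by blast
  have sub: "\<And>k. (\<lambda>i. (c^^i) e) ` {..<k} \<subseteq> A" using cA e_A by auto
  have "card ((\<lambda>i. (c^^i) e) ` {..<m}) = m" using m(3) by (simp add: card_image)
  hence "m \<le> card A" using card_mono[OF finA sub[of m]] by simp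
  hence mp: "m = p" using m(1) card_A by simp
  have "card ((\<lambda>i. (c^^i) e) ` {..<p}) = card A" using m(3) mp card_A by (simp add: card_image)
  hence "(\<lambda>i. (c^^i) e) ` {..<p} = A" using card_subset_eq[OF finA sub[of p]] by simp
  thus ?thesis using m(2) mp by simp
qed

lemma c_fixA: "x \<in> A \<Longrightarrow> (c^^p) x = x"
proof -
  assume "x \<in> A"
  then obtain i where x: "x = (c^^i) e" using c_cycle by auto
  have "(c^^p) x = (c^^(p+i)) e" unfolding x by (simp add: funpow_add)
  also have "\<dots> = (c^^i) ((c^^p) e)" by (simp add: funpow_add add.commute)
  finally show ?thesis using c_cycle x by simp
qed

lemma c_fixA_mult: "x \<in> A \<Longrightarrow> (c^^(p*j)) x = x"
proof (induct j)
  case (Suc j)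
  have "(c^^(p * Suc j)) x = (c^^p) ((c^^(p*j)) x)" by (simp add: funpow_add)
  thus ?case using Suc c_fixA by simp
qed simp

lemma finS1: "card (S - {\<one>}) = p - 1" using card_S card_A one_S finS by simp

lemma comm_cS: "s \<in> S \<Longrightarrow> c \<otimes> s = s \<otimes> c"
proof -
  assume s: "s \<in> S"
  have sG: "s \<in> carrier G" using s S_G by auto
  define \<phi> where "\<phi> = (\<lambda>s. c \<otimes> s \<otimes> inv c)"
  have "\<phi> s = s"
  proof (rule ccontr)
    assume nf: "\<phi> s \<noteq> s"
    have phi_pow: "(\<phi>^^i) s = c [^] i \<otimes> s \<otimes> inv (c [^] i)" for i
      unfolding \<phi>_def by (rule conj_pow[OF cG sG])
    have "(\<phi>^^(p^n)) s = s" using phi_pow[of "p^n"] cp sG by simp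
    from orbit_lemma[OF pr this nf] obtain m where
      m: "p \<le> m" "inj_on (\<lambda>i. (\<phi>^^i) s) {..<m}" by blast
    have sne: "s \<noteq> \<one>" using nf unfolding \<phi>_def using cG by auto
    have inS: "(\<phi>^^i) s \<in> S - {\<one>}" for i
    proof -
      have ci: "c [^] i \<in> carrier G" "c [^] i \<in> K" using cG sub_pow_closed[OF subK cK] by auto
      have "(\<phi>^^i) s \<in> T" unfolding phi_pow using rccG[OF ci(1)] s S_def by auto
      moreover have "(\<phi>^^i) s \<in> K" unfolding phi_pow using ci s S_K
        subgroup.m_closed[OF subK] subgroup.m_inv_closed[OF subK] by auto
      moreover have "(\<phi>^^i) s \<noteq> \<one>" unfolding phi_pow using ci sG sne
        by (simp add: inv_solve_right')
      ultimately show ?thesis unfolding S_def by auto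
    qed
    have "card ((\<lambda>i. (\<phi>^^i) s) ` {..<m}) = m" using m(2) by (simp add: card_image)
    moreover have "(\<lambda>i. (\<phi>^^i) s) ` {..<m} \<subseteq> S - {\<one>}" using inS by auto
    ultimately have "m \<le> card (S - {\<one>})" using card_mono[OF finite_Diff[OF finS]] by metis
    hence "m \<le> p - 1" using finS1 by simp
    thus False using m(1) prime_gt_0_nat[OF pr] by linarith
  qed
  thus ?thesis unfolding \<phi>_def using cG sG by (simp add: inv_solve_right')
qed

lemma S_agree: "s \<in> S \<Longrightarrow> \<exists>j. \<forall>x\<in>A. s x = (c^^j) x"
proof -
  assume s: "s \<in> S"
  have sG: "s \<in> carrier G" using s S_G by auto
  have "s e \<in> A" using s S_K unfolding A_def by auto
  then obtain j where j: "s e = (c^^j) e" using c_cycle by auto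
  have "\<forall>x\<in>A. s x = (c^^j) x"
  proof
    fix x assume "x \<in> A"
    then obtain i where x: "x = (c^^i) e" using c_cycle by auto
    have com: "c [^] i \<otimes> s = s \<otimes> c [^] i" using group_commutes_pow[OF comm_cS[OF s] cG sG] .
    have "s x = (s \<otimes> c [^] i) e" unfolding x using mult_apply[OF sG nat_pow_closed[OF cG] eL] pow_apply[OF cG eL] by simp
    also have "\<dots> = (c [^] i \<otimes> s) e" using com by simp
    also have "\<dots> = (c [^] i) (s e)" by (rule mult_apply[OF nat_pow_closed[OF cG] sG eL])
    also have "\<dots> = (c^^i) ((c^^j) e)" using pow_apply[OF cG memL[OF sG eL]] j by simp
    also have "\<dots> = (c^^j) x" unfolding x by (simp add: fp add.commute)
    finally show "s x = (c^^j) x" .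
  qed
  thus ?thesis by blast
qed

lemma gA_disj: "x \<in> A \<Longrightarrow> g x \<notin> A"
proof
  assume x: "x \<in> A" and gx: "g x \<in> A"
  obtain k1 where k1: "k1 \<in> K" "x = k1 e" using x unfolding A_def by auto
  obtain k2 where k2: "k2 \<in> K" "g x = k2 e" using gx unfolding A_def by auto
  have kG: "k1 \<in> carrier G" "k2 \<in> carrier G" using k1 k2 K_G by auto
  define h where "h = inv k2 \<otimes> g \<otimes> k1"
  have hG: "h \<in> carrier G" unfolding h_def using kG gG by simp
  have "h e = (inv k2) (g (k1 e))" unfolding h_def using kG gG eL memL mult_apply by simp
  also have "\<dots> = e" using k1 k2 inv_apply1[OF kG(2) eL] by simp
  finally have hK: "h \<in> K" using H_iff hG H_K by auto
  have h2: "h = inv k2 \<otimes> (g \<otimes> k1)" unfolding h_def using kG gG by (simp add: m_assoc)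
  hence "g \<otimes> k1 = k2 \<otimes> h" using inv_solve_left[of h k2 "g \<otimes> k1"] kG gG hG by simp
  hence "g = k2 \<otimes> h \<otimes> inv k1" using inv_solve_right[of g "k2 \<otimes> h" k1] kG gG hG by simp
  moreover have ik1: "inv k1 \<in> K" by (rule subgroup.m_inv_closed[OF subK k1(1)])
  have "k2 \<otimes> h \<in> K" by (rule subgroup.m_closed[OF subK k2(1) hK])
  hence "k2 \<otimes> h \<otimes> inv k1 \<in> K" by (rule subgroup.m_closed[OF subK _ ik1])
  ultimately show False using gK by simp
qed

lemma gA: "g ` A = L - A"
proof -
  have sub: "g ` A \<subseteq> L - A" using gA_disj memL[OF gG] A_L by auto
  have "card (g ` A) = p" using card_A inj_on_subset[OF injG[OF gG] A_L] by (simp add: card_image)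
  moreover have "card (L - A) = p" using cardL card_A A_L finA by (simp add: card_Diff_subset)
  ultimately show ?thesis using card_subset_eq[OF _ sub] finL by simp
qed

lemma KLA: "k \<in> K \<Longrightarrow> y \<in> L - A \<Longrightarrow> k y \<in> L - A"
proof -
  assume k: "k \<in> K" and y: "y \<in> L - A"
  have kG: "k \<in> carrier G" using k K_G by auto
  have "k y \<notin> A"
  proof
    assume "k y \<in> A"
    hence "(inv k) (k y) \<in> A" using K_A subgroup.m_inv_closed[OF subK k] by auto
    thus False using inv_apply1[OF kG] y by auto
  qed
  thus ?thesis using memL[OF kG] y by auto
qed

lemma ginv_A: "y \<in> L - A \<Longrightarrow> (inv g) y \<in> A \<and> g ((inv g) y) = y"
proof -
  assume "y \<in> L - A"
  then obtain a where a: "a \<in> A" "y = g a" using gA by auto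
  thus ?thesis using inv_apply1[OF gG] A_L by auto
qed

lemma conjg_S: "s \<in> S \<Longrightarrow> inv g \<otimes> s \<otimes> g \<in> S"
proof -
  assume s: "s \<in> S"
  have sG: "s \<in> carrier G" using s S_G by auto
  define t where "t = inv g \<otimes> s \<otimes> g"
  have tT: "t \<in> T" using rccG[OF inv_closed[OF gG], of s] s gG unfolding t_def S_def by simp
  have ge: "g e \<in> L - A" using gA e_A by auto
  have "s (g e) \<in> L - A" using KLA ge s S_K by auto
  hence "(inv g) (s (g e)) \<in> A" using ginv_A by auto
  moreover have "t e = (inv g) (s (g e))" unfolding t_def using sG gG eL memL mult_apply by simp
  ultimately have "t e \<in> A" by simp
  hence "R (t e) \<in> S" unfolding S_eq by simp
  hence "t \<in> S" using T_eq[OF tT] by simp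
  thus ?thesis unfolding t_def .
qed

lemma S_agreeB: "s \<in> S \<Longrightarrow> \<exists>j. \<forall>y\<in>L-A. s y = g ((c^^j) ((inv g) y))"
proof -
  assume s: "s \<in> S"
  have sG: "s \<in> carrier G" using s S_G by auto
  obtain j where j: "\<forall>x\<in>A. (inv g \<otimes> s \<otimes> g) x = (c^^j) x" using S_agree[OF conjg_S[OF s]] by blast
  have "\<forall>y\<in>L-A. s y = g ((c^^j) ((inv g) y))"
  proof
    fix y assume y: "y \<in> L - A"
    have a: "(inv g) y \<in> A" "g ((inv g) y) = y" using ginv_A[OF y] by auto
    have aL: "(inv g) y \<in> L" using a A_L by auto
    have igs: "inv g \<otimes> s \<in> carrier G" using sG gG by simp
    have "(inv g \<otimes> s \<otimes> g) ((inv g) y) = (inv g \<otimes> s) (g ((inv g) y))"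
      by (rule mult_apply[OF igs gG aL])
    also have "\<dots> = (inv g \<otimes> s) y" using a(2) by simp
    also have "\<dots> = (inv g) (s y)" using y by (intro mult_apply[OF inv_closed[OF gG] sG]) auto
    finally have "(inv g \<otimes> s \<otimes> g) ((inv g) y) = (inv g) (s y)" .
    hence "(inv g) (s y) = (c^^j) ((inv g) y)" using j a by simp
    moreover have "s y \<in> L" using memL[OF sG] y by auto
    ultimately show "s y = g ((c^^j) ((inv g) y))" using inv_apply2[OF gG] by metis
  qed
  thus ?thesis by blast
qed


lemma cA_pow_agree:
  assumes "\<forall>x\<in>A. s x = (c^^j) x" "s \<in> K"
  shows "x \<in> A \<Longrightarrow> (s^^k) x = (c^^(k*j)) x"
proof (induct k arbitrary: x)
  case (Suc k)
  have sx: "s x = (c^^j) x" using assms(1) Suc(2) by simp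
  have sxA: "s x \<in> A" using K_A[OF assms(2) Suc(2)] .
  have "(s^^Suc k) x = (s^^k) (s x)" by (simp add: funpow_Suc_right del: funpow.simps)
  also have "\<dots> = (c^^(k*j)) (s x)" by (rule Suc(1)[OF sxA])
  also have "\<dots> = (c^^(k*j)) ((c^^j) x)" using sx by simp
  also have "\<dots> = (c^^(Suc k * j)) x" by (simp add: fp add.commute)
  finally show ?case .
qed simp

lemma cB_pow_agree:
  assumes "\<forall>y\<in>L-A. s y = g ((c^^j) ((inv g) y))" "s \<in> K"
  shows "y \<in> L - A \<Longrightarrow> (s^^k) y = g ((c^^(k*j)) ((inv g) y))"
proof (induct k arbitrary: y)
  case 0 thus ?case using ginv_A by simp
next
  case (Suc k)
  have y': "s y \<in> L - A" using KLA assms(2) Suc by auto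
  have a: "(c^^j) ((inv g) y) \<in> A" using cA ginv_A Suc by auto
  have "(s^^Suc k) y = (s^^k) (s y)" by (simp add: funpow_Suc_right del: funpow.simps)
  also have "\<dots> = g ((c^^(k*j)) ((inv g) (s y)))" using Suc y' by simp
  also have "(inv g) (s y) = (c^^j) ((inv g) y)" using assms(1) Suc inv_apply1[OF gG] a A_L by auto
  also have "g ((c^^(k*j)) ((c^^j) ((inv g) y))) = g ((c^^(Suc k * j)) ((inv g) y))"
    by (simp add: fp add.commute)
  finally show ?case .
qed

lemma LA_cases: "x \<in> L \<Longrightarrow> x \<in> A \<or> x \<in> L - A" by auto

lemma S_comm: "s1 \<in> S \<Longrightarrow> s2 \<in> S \<Longrightarrow> s1 \<otimes> s2 = s2 \<otimes> s1"
proof -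
  assume s1: "s1 \<in> S" and s2: "s2 \<in> S"
  have sG: "s1 \<in> carrier G" "s2 \<in> carrier G" using s1 s2 S_G by auto
  have sK: "s1 \<in> K" "s2 \<in> K" using s1 s2 S_K by auto
  obtain j1 where j1: "\<forall>x\<in>A. s1 x = (c^^j1) x" using S_agree[OF s1] by blast
  obtain j2 where j2: "\<forall>x\<in>A. s2 x = (c^^j2) x" using S_agree[OF s2] by blast
  obtain k1 where k1: "\<forall>y\<in>L-A. s1 y = g ((c^^k1) ((inv g) y))" using S_agreeB[OF s1] by blast
  obtain k2 where k2: "\<forall>y\<in>L-A. s2 y = g ((c^^k2) ((inv g) y))" using S_agreeB[OF s2] by blast
  show ?thesis
  proof (rule extG)
    show "s1 \<otimes> s2 \<in> carrier G" "s2 \<otimes> s1 \<in> carrier G" using sG by auto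
    fix x assume x: "x \<in> L"
    have "s1 (s2 x) = s2 (s1 x)"
    proof (cases "x \<in> A")
      case True
      have "s1 (s2 x) = (c^^j1) ((c^^j2) x)" using True j1 j2 cA by simp
      also have "\<dots> = (c^^j2) ((c^^j1) x)" by (simp add: fp add.commute)
      also have "\<dots> = s2 (s1 x)" using True j1 j2 cA by simp
      finally show ?thesis .
    next
      case False
      hence y: "x \<in> L - A" using x by auto
      have a: "(inv g) x \<in> A" using ginv_A[OF y] by auto
      have c1: "(c^^k1) ((inv g) x) \<in> L" using cA[OF a] A_L by auto
      have c2: "(c^^k2) ((inv g) x) \<in> L" using cA[OF a] A_L by auto
      have i1: "(inv g) (s1 x) = (c^^k1) ((inv g) x)" using k1 y inv_apply1[OF gG c1] by simp
      have i2: "(inv g) (s2 x) = (c^^k2) ((inv g) x)" using k2 y inv_apply1[OF gG c2] by simp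
      have "s1 (s2 x) = g ((c^^k1) ((c^^k2) ((inv g) x)))" using k1 KLA[OF sK(2) y] i2 by simp
      also have "\<dots> = g ((c^^k2) ((c^^k1) ((inv g) x)))" by (simp add: fp add.commute)
      also have "\<dots> = s2 (s1 x)" using k2 KLA[OF sK(1) y] i1 by simp
      finally show ?thesis .
    qed
    thus "(s1 \<otimes> s2) x = (s2 \<otimes> s1) x" using mult_apply sG x by simp
  qed
qed

lemma S_pow: "s \<in> S \<Longrightarrow> s [^] p = \<one>"
proof -
  assume s: "s \<in> S"
  have sG: "s \<in> carrier G" and sK: "s \<in> K" using s S_G S_K by auto
  obtain j where j: "\<forall>x\<in>A. s x = (c^^j) x" using S_agree[OF s] by blast
  obtain k where k: "\<forall>y\<in>L-A. s y = g ((c^^k) ((inv g) y))" using S_agreeB[OF s] by blast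
  show ?thesis
  proof (rule extG)
    show "s [^] p \<in> carrier G" "\<one> \<in> carrier G" using sG by auto
    fix x assume x: "x \<in> L"
    have "(s^^p) x = x"
    proof (cases "x \<in> A")
      case True
      thus ?thesis using cA_pow_agree[OF j sK True, of p] c_fixA_mult[OF True] by simp
    next
      case False
      hence y: "x \<in> L - A" using x by auto
      show ?thesis using cB_pow_agree[OF k sK y, of p] c_fixA_mult ginv_A[OF y] by simp
    qed
    thus "(s [^] p) x = \<one> x" using pow_apply[OF sG x] one_apply[OF x] by simp
  qed
qed

definition "K1 = generate G S"

lemma sgK1: "subgroup K1 G" unfolding K1_def by (rule generate_is_subgroup[OF S_G])
lemma K1_K: "K1 \<subseteq> K" unfolding K1_def by (rule generate_subgroup_incl[OF S_K subK])
lemma S_K1: "S \<subseteq> K1" unfolding K1_def by (rule subsetI, rule generate.incl)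
lemma K1_G: "K1 \<subseteq> carrier G" using subgroup.subset[OF sgK1] .

lemma comm1: "z \<in> K1 \<Longrightarrow> s \<in> S \<Longrightarrow> z \<otimes> s = s \<otimes> z"
  unfolding K1_def
proof (induct z rule: generate.induct)
  case one thus ?case using S_G by auto
next
  case (incl h) thus ?case using S_comm by auto
next
  case (inv h)
  have "h \<otimes> s = s \<otimes> h" using S_comm inv by auto
  thus ?case using comm_inv[of h s] inv S_G by auto
next
  case (eng h1 h2)
  have hG: "h1 \<in> carrier G" "h2 \<in> carrier G" using eng(1,3) K1_G unfolding K1_def by auto
  have sG: "s \<in> carrier G" using eng S_G by auto
  have "h1 \<otimes> h2 \<otimes> s = h1 \<otimes> (s \<otimes> h2)" using eng hG sG by (simp add: m_assoc)
  also have "\<dots> = s \<otimes> (h1 \<otimes> h2)" using eng hG sG by (simp add: m_assoc[symmetric])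
  finally show ?case .
qed

lemma comm2: "w \<in> K1 \<Longrightarrow> z \<in> K1 \<Longrightarrow> z \<otimes> w = w \<otimes> z"
  unfolding K1_def
proof (induct w rule: generate.induct)
  case one thus ?case using K1_G unfolding K1_def by auto
next
  case (incl h) thus ?case using comm1 unfolding K1_def by auto
next
  case (inv h)
  have zh: "z \<otimes> h = h \<otimes> z" using comm1 inv unfolding K1_def by auto
  have zG: "z \<in> carrier G" using K1_G inv unfolding K1_def by auto
  have hG: "h \<in> carrier G" using S_G inv by auto
  show ?case using comm_inv[OF hG zG zh[symmetric]] by simp
next
  case (eng h1 h2)
  have hG: "h1 \<in> carrier G" "h2 \<in> carrier G" using eng(1,3) K1_G unfolding K1_def by auto
  have zG: "z \<in> carrier G" using eng K1_G unfolding K1_def by auto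
  have "z \<otimes> (h1 \<otimes> h2) = h1 \<otimes> z \<otimes> h2" using eng hG zG by (simp add: m_assoc[symmetric])
  also have "\<dots> = h1 \<otimes> h2 \<otimes> z" using eng hG zG by (simp add: m_assoc)
  finally show ?case .
qed

lemma pow1: "z \<in> K1 \<Longrightarrow> z [^] p = \<one>"
  unfolding K1_def
proof (induct z rule: generate.induct)
  case one thus ?case by simp
next
  case (incl h) thus ?case using S_pow by auto
next
  case (inv h) thus ?case using S_pow S_G nat_pow_inv by auto
next
  case (eng h1 h2)
  have hG: "h1 \<in> carrier G" "h2 \<in> carrier G" using eng(1,3) K1_G unfolding K1_def by auto
  have "h1 \<otimes> h2 = h2 \<otimes> h1" using comm2 eng(1,3) unfolding K1_def by metis
  thus ?case using pow_mult_distrib[OF _ hG] eng by simp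
qed

lemma H1_fixA: "z \<in> H \<inter> K1 \<Longrightarrow> x \<in> A \<Longrightarrow> z x = x"
proof -
  assume z: "z \<in> H \<inter> K1" and x: "x \<in> A"
  have xL: "x \<in> L" using x A_L by auto
  have RS: "R x \<in> S" using x S_eq by auto
  have zG: "z \<in> carrier G" and RG: "R x \<in> carrier G" using z K1_G RS S_G by auto
  have "z x = (z \<otimes> R x) e" using mult_apply[OF zG RG eL] R_e[OF xL] by simp
  also have "\<dots> = (R x \<otimes> z) e" using comm1[of z "R x"] z RS by simp
  also have "\<dots> = x" using mult_apply[OF RG zG eL] z H_iff R_e[OF xL] by simp
  finally show ?thesis .
qed

lemma card_H1_le: "card (H \<inter> K1) \<le> p"
proof -
  define y0 where "y0 = g e"
  have y0: "y0 \<in> L - A" unfolding y0_def using gA e_A by auto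
  have trans: "(\<lambda>s. s y0) ` S = L - A"
  proof -
    have inj: "inj_on (\<lambda>s. s y0) S"
    proof (rule inj_onI)
      fix s s' assume s: "s \<in> S" and s': "s' \<in> S" and eq: "s y0 = s' y0"
      obtain a where a: "a \<in> A" "s = R a" using s S_eq by auto
      obtain a' where a': "a' \<in> A" "s' = R a'" using s' S_eq by auto
      have "f y0 a = f y0 a'" using eq a a' y0 R_apply by auto
      hence "a = a'" using lbij[of y0] y0 a a' A_L unfolding bij_betw_def inj_on_def by auto
      thus "s = s'" using a a' by simp
    qed
    have sub: "(\<lambda>s. s y0) ` S \<subseteq> L - A" using KLA y0 S_K by auto
    have "card ((\<lambda>s. s y0) ` S) = p" using inj card_S card_A by (simp add: card_image)
    moreover have "card (L - A) = p" using cardL card_A A_L finA by (simp add: card_Diff_subset)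
    ultimately show ?thesis using card_subset_eq[OF _ sub] finL by simp
  qed
  have inj: "inj_on (\<lambda>z. z y0) (H \<inter> K1)"
  proof (rule inj_onI)
    fix z z' assume z: "z \<in> H \<inter> K1" and z': "z' \<in> H \<inter> K1" and eq: "z y0 = z' y0"
    have zG: "z \<in> carrier G" "z' \<in> carrier G" using z z' K1_G by auto
    show "z = z'"
    proof (rule extG[OF zG])
      fix x assume x: "x \<in> L"
      show "z x = z' x"
      proof (cases "x \<in> A")
        case True thus ?thesis using H1_fixA[OF z True] H1_fixA[OF z' True] by simp
      next
        case False
        then obtain s where s: "s \<in> S" "x = s y0" using trans x by force
        have sG: "s \<in> carrier G" using s S_G by auto
        have y0L: "y0 \<in> L" using y0 by auto
        have "z x = (z \<otimes> s) y0" using mult_apply[OF zG(1) sG y0L] s by simp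
        also have "\<dots> = s (z y0)" using comm1 z s mult_apply[OF sG zG(1) y0L] by auto
        also have "\<dots> = (s \<otimes> z') y0" using eq mult_apply[OF sG zG(2) y0L] by simp
        also have "\<dots> = z' x" using comm1 z' s mult_apply[OF zG(2) sG y0L] by auto
        finally show ?thesis .
      qed
    qed
  qed
  have sub: "(\<lambda>z. z y0) ` (H \<inter> K1) \<subseteq> L - A" using KLA y0 K1_K by auto
  have "card (H \<inter> K1) = card ((\<lambda>z. z y0) ` (H \<inter> K1))" using inj by (simp add: card_image)
  also have "\<dots> \<le> card (L - A)" using card_mono[OF _ sub] finL by simp
  also have "\<dots> = p" using cardL card_A A_L finA by (simp add: card_Diff_subset)
  finally show ?thesis .
qed

lemma card_H1: "card (H \<inter> K1) \<in> {1, p}"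
proof (cases "card (H \<inter> K1) = 1")
  case False
  have sg: "subgroup (H \<inter> K1) G" using subgroups_Inter_pair[OF subH sgK1] .
  have fin: "finite (H \<inter> K1)" using finH by simp
  have one: "\<one> \<in> H \<inter> K1" using subgroup.one_closed[OF sg] .
  obtain x where x: "x \<in> H \<inter> K1" "x \<noteq> \<one>"
  proof (rule ccontr)
    assume "\<not> thesis"
    hence "H \<inter> K1 = {\<one>}" using one that by blast
    thus False using False by simp
  qed
  have xG: "x \<in> carrier G" using x K1_G by auto
  have "ord x dvd p" using pow1 x pow_eq_id[OF xG] by auto
  moreover have "ord x \<noteq> 1" using ord_eq_1[OF xG] x by simp
  ultimately have op: "ord x = p" using prime_nat_iff[THEN iffD1, OF pr] by auto
  have "inj_on (\<lambda>i. x [^] i) {0 .. ord x - 1}" by (rule ord_inj[OF xG])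
  hence "card ((\<lambda>i. x [^] i) ` {0 .. p - 1}) = p" using op pr prime_gt_0_nat
    by (simp add: card_image)
  moreover have "(\<lambda>i. x [^] i) ` {0 .. p - 1} \<subseteq> H \<inter> K1" using sub_pow_closed[OF sg x(1)] by auto
  ultimately have "p \<le> card (H \<inter> K1)" using card_mono[OF fin] by (metis (no_types, lifting))
  thus ?thesis using card_H1_le by simp
qed simp

lemma card_K1: "card K1 = p * card (H \<inter> K1)"
  using prod_card[OF sgK1 S_K1 K1_K] card_S card_A by simp

lemma elem: "elem_abelian (G\<lparr>carrier := K1\<rparr>) p"
proof -
  interpret K1G: group "G\<lparr>carrier := K1\<rparr>" by (rule subgroup_imp_group[OF sgK1])
  have "comm_group (G\<lparr>carrier := K1\<rparr>)"
    by (rule K1G.group_comm_groupI) (simp add: comm2)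
  moreover have "\<forall>x\<in>K1. x [^]\<^bsub>G\<lparr>carrier := K1\<rparr>\<^esub> p = \<one>\<^bsub>G\<lparr>carrier := K1\<rparr>\<^esub>"
    using pow1 by (simp add: pow_carrier)
  ultimately show ?thesis unfolding elem_abelian_def by simp
qed

end

theorem corollary5p3:
  fixes L :: "'a set" and f :: "'a \<Rightarrow> 'a \<Rightarrow> 'a" and e :: 'a and p :: nat
    and K :: "('a \<Rightarrow> 'a) set"
  assumes "Factorial_Ring.prime p" and "odd p"
    and "finite L" and "is_loop L f e" and "right_cc L f"
    and "card L = 2 * p"
    and "subgroup K (env_G L f)"
    and "env_H L f e \<subset> K" and "K \<subset> carrier (env_G L f)"
    and "card (rcosets\<^bsub>env_G L f\<^esub> K) = 2"
    and "card (rcosets\<^bsub>(env_G L f)\<lparr>carrier := K\<rparr>\<^esub> (env_H L f e)) = p"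
  shows "let G = env_G L f;
             K1 = generate G (env_T L f \<inter> K);
             H1 = env_H L f e \<inter> K1
         in card H1 \<in> {1, p} \<and> elem_abelian (G\<lparr>carrier := K1\<rparr>) p
            \<and> card K1 \<in> {p, p^2}"
proof -
  have rx: "rccx L f e p K (env_G L f)"
    by (rule rccx.intro[OF refl assms(1) assms(3) assms(4) assms(5) assms(6) assms(7) assms(8) assms(9) assms(11)])
  interpret X: rccx L f e p K "env_G L f" by (rule rx)
  obtain c n where cn: "c \<in> K" "c e \<noteq> e" "c [^]\<^bsub>env_G L f\<^esub> (p^n) = \<one>\<^bsub>env_G L f\<^esub>"
    using X.sylow_elt by blast
  obtain g where g: "g \<in> carrier (env_G L f)" "g \<notin> K" using assms(9) by blast
  interpret Y: rccy L f e p K "env_G L f" c n g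
    by (rule rccy.intro[OF rx rccy_axioms.intro[OF cn(1) cn(2) cn(3) g(1) g(2)]])
  have "card Y.K1 \<in> {p, p^2}" using Y.card_K1 Y.card_H1 by (auto simp: power2_eq_square)
  thus ?thesis using Y.card_H1 Y.elem unfolding Y.K1_def X.S_def Let_def by simp
qed

end
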